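(* Let $n\ge1$, let $\mathcal{S}$ be a discrete subgroup of $O(n+1)$ satisfying the spanning property, and let $f$ be an $\mathcal{S}$-invariant function on $\mathbb{S}^n$ with $c_1\le f\le c_2$ for positive constants $c_1,c_2$. For $p<-n-1$ let $h^{(p)}$ be the $\mathcal{S}$-invariant solution of $\det(\nabla^2h+hI)=fh^{p-1}$ on $\mathbb{S}^n$ that maximizes $V$ over $\mathcal{K}_p(\mathcal{S})$. Then $$\lim_{p\to-\infty}\min_{\mathbb{S}^n}h^{(p)}=1.$$
   Context: $\mathcal{K}_p(\mathcal{S})=\{\Omega\in\mathcal{K}_0(\mathcal{S}):\int_{\mathbb{S}^n}fh_\Omega^p=\int_{\mathbb{S}^n}f\}$, $\mathcal{K}_0(\mathcal{S})$ the $\mathcal{S}$-invariant convex bodies in $\mathbb{R}^{n+1}$ containing the origin, $h_\Omega$ the support function, $V(\Omega)=(n+1)|\Omega|$. Spanning property: for every $a\in\mathbb{S}^n$, $\mathrm{conv}\{\phi(a):\phi\in\mathcal{S}\}$ is a non-degenerate $(n+1)$-dimensional polytope. *)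

theory Defs
  imports "HOL-Analysis.Analysis"
begin

text \<open>Ambient space: a Euclidean space 'a of dimension n+1 (n = DIM('a) - 1).
  The unit sphere S^n is sphere 0 1.\<close>

definition orth_subgroup :: "('a::euclidean_space \<Rightarrow> 'a) set \<Rightarrow> bool" where
  "orth_subgroup S \<longleftrightarrow>
     (\<forall>\<phi>\<in>S. orthogonal_transformation \<phi>) \<and> id \<in> S \<and>
     (\<forall>\<phi>\<in>S. \<forall>\<psi>\<in>S. \<phi> \<circ> \<psi> \<in> S) \<and> (\<forall>\<phi>\<in>S. inv \<phi> \<in> S)"

definition discrete_orth_subgroup :: "('a::euclidean_space \<Rightarrow> 'a) set \<Rightarrow> bool" where
  "discrete_orth_subgroup S \<longleftrightarrow> orth_subgroup S \<and>
     (\<exists>\<epsilon>>0. \<forall>\<phi>\<in>S. \<phi> \<noteq> id \<longrightarrow> onorm (\<lambda>x. \<phi> x - x) \<ge> \<epsilon>)"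

definition spanning_property :: "('a::euclidean_space \<Rightarrow> 'a) set \<Rightarrow> bool" where
  "spanning_property S \<longleftrightarrow>
     (\<forall>a\<in>sphere 0 1. polytope (convex hull {\<phi> a | \<phi>. \<phi> \<in> S}) \<and>
        aff_dim (convex hull {\<phi> a | \<phi>. \<phi> \<in> S}) = int DIM('a))"

definition support_fun :: "'a::euclidean_space set \<Rightarrow> 'a \<Rightarrow> real" where
  "support_fun \<Omega> x = (SUP y\<in>\<Omega>. x \<bullet> y)"

definition convex_body :: "'a::euclidean_space set \<Rightarrow> bool" where
  "convex_body \<Omega> \<longleftrightarrow> compact \<Omega> \<and> convex \<Omega> \<and> interior \<Omega> \<noteq> {}"

definition K0 :: "('a::euclidean_space \<Rightarrow> 'a) set \<Rightarrow> 'a set set" where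
  "K0 S = {\<Omega>. convex_body \<Omega> \<and> 0 \<in> \<Omega> \<and> (\<forall>\<phi>\<in>S. \<phi> ` \<Omega> = \<Omega>)}"

text \<open>Integration over the sphere S^n (up to a positive constant factor, which is irrelevant
  for the defining identity of K_p): via the cone measure,
  int_{S^n} g d sigma = (n+1) * int_{ball 0 1} g(x/|x|) dx.\<close>
definition sphere_int :: "('a::euclidean_space \<Rightarrow> ennreal) \<Rightarrow> ennreal" where
  "sphere_int g = (\<integral>\<^sup>+ x. g (x /\<^sub>R norm x) * indicator (ball 0 1) x \<partial>lborel)"

definition pow_ext :: "real \<Rightarrow> real \<Rightarrow> ennreal" where
  "pow_ext t p = (if t = 0 \<and> p < 0 then \<infinity> else ennreal (t powr p))"

definition Kp :: "('a::euclidean_space \<Rightarrow> 'a) set \<Rightarrow> ('a \<Rightarrow> real) \<Rightarrow> real \<Rightarrow> 'a set set" where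
  "Kp S f p = {\<Omega>\<in>K0 S.
     sphere_int (\<lambda>u. ennreal (f u) * pow_ext (support_fun \<Omega> u) p) = sphere_int (\<lambda>u. ennreal (f u))}"

definition V :: "'a::euclidean_space set \<Rightarrow> real" where
  "V \<Omega> = real DIM('a) * measure lebesgue \<Omega>"

definition is_V_maximizer :: "('a::euclidean_space \<Rightarrow> 'a) set \<Rightarrow> ('a \<Rightarrow> real) \<Rightarrow> real \<Rightarrow> 'a set \<Rightarrow> bool" where
  "is_V_maximizer S f p \<Omega> \<longleftrightarrow> \<Omega> \<in> Kp S f p \<and> (\<forall>\<Omega>'\<in>Kp S f p. V \<Omega>' \<le> V \<Omega>)"

end

theory Submission
  imports Defs
begin

lemma orth_lin: "orthogonal_transformation \<phi> \<Longrightarrow> linear \<phi>"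
  by (simp add: orthogonal_transformation)

lemma fixed_zero:
  fixes S :: "('a::euclidean_space \<Rightarrow> 'a) set"
  assumes "DIM('a) \<ge> 2" "orth_subgroup S" "spanning_property S"
    and hfix: "\<And>\<psi>. \<psi> \<in> S \<Longrightarrow> \<psi> z = z"
  shows "z = 0"
proof (rule ccontr)
  assume z: "z \<noteq> 0"
  define a where "a = z /\<^sub>R norm z"
  have a: "a \<in> sphere 0 1" using z by (simp add: a_def)
  have "{\<phi> a | \<phi>. \<phi> \<in> S} = {a}"
  proof -
    have "\<phi> a = a" if "\<phi> \<in> S" for \<phi>
    proof -
      have "linear \<phi>" using assms(2) that by (simp add: orth_subgroup_def orthogonal_transformation)
      then show ?thesis using hfix[OF that] by (simp add: a_def linear_scale)
    qed
    moreover have "id \<in> S" using assms(2) by (simp add: orth_subgroup_def)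
    ultimately show ?thesis by (auto intro!: exI[of _ id])
  qed
  then have "aff_dim (convex hull {\<phi> a | \<phi>. \<phi> \<in> S}) = 0" by simp
  moreover have "aff_dim (convex hull {\<phi> a | \<phi>. \<phi> \<in> S}) = int DIM('a)"
    using assms(3) a by (simp add: spanning_property_def)
  ultimately show False using assms(1) by simp
qed

lemma zero_in_hull:
  fixes S :: "('a::euclidean_space \<Rightarrow> 'a) set"
  assumes "DIM('a) \<ge> 2" "orth_subgroup S" "spanning_property S"
    and u: "u \<in> sphere 0 1"
  shows "0 \<in> convex hull {\<phi> u | \<phi>. \<phi> \<in> S}"
proof -
  define Orb where "Orb = {\<phi> u | \<phi>. \<phi> \<in> S}"
  define K where "K = convex hull Orb"
  have "compact K" using assms(3) u by (auto simp: spanning_property_def K_def Orb_def intro: polytope_imp_compact)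
  hence cK: "closed K" by (simp add: compact_imp_closed)
  have "id \<in> S" using assms(2) by (simp add: orth_subgroup_def)
  hence "u \<in> Orb" unfolding Orb_def by (auto intro!: exI[of _ id])
  hence "K \<noteq> {}" unfolding K_def by (auto simp: hull_inc)
  define z where "z = closest_point K 0"
  have zK: "z \<in> K" using closest_point_in_set[OF cK \<open>K \<noteq> {}\<close>] by (simp add: z_def)
  have "\<psi> z = z" if \<psi>: "\<psi> \<in> S" for \<psi>
  proof -
    have ot: "orthogonal_transformation \<psi>" using assms(2) \<psi> by (simp add: orth_subgroup_def)
    have lin: "linear \<psi>" using ot by (simp add: orthogonal_transformation)
    have "\<psi> ` Orb \<subseteq> Orb"
    proof
      fix x assume "x \<in> \<psi> ` Orb"
      then obtain \<phi> where "\<phi> \<in> S" "x = \<psi> (\<phi> u)" by (auto simp: Orb_def)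
      moreover have "\<psi> \<circ> \<phi> \<in> S" using assms(2) \<psi> \<open>\<phi> \<in> S\<close> by (simp add: orth_subgroup_def)
      ultimately show "x \<in> Orb" unfolding Orb_def by (metis (mono_tags, lifting) comp_apply mem_Collect_eq)
    qed
    hence "\<psi> ` K \<subseteq> K" unfolding K_def using convex_hull_linear_image[OF lin] hull_mono by metis
    hence "\<psi> z \<in> K" using zK by blast
    moreover have "\<forall>y\<in>K. dist 0 (\<psi> z) \<le> dist 0 y"
      using closest_point_le[OF cK, of _ 0] orthogonal_transformation_norm[OF ot] by (simp add: z_def dist_norm)
    ultimately have "\<psi> z = closest_point K 0"
      using closest_point_unique[of K "\<psi> z" 0] cK by (simp add: K_def convex_convex_hull)
    thus ?thesis by (simp add: z_def)
  qed
  hence "z = 0" using fixed_zero[OF assms(1-3)] by blast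
  thus ?thesis using zK by (simp add: K_def Orb_def)
qed

lemma pos_dir:
  fixes S :: "('a::euclidean_space \<Rightarrow> 'a) set"
  assumes D: "DIM('a) \<ge> 2" and G: "orth_subgroup S" and sp: "spanning_property S"
    and u: "u \<in> sphere 0 1" and a: "a \<in> sphere 0 1"
  shows "\<exists>\<phi>\<in>S. u \<bullet> \<phi> a > 0"
proof (rule ccontr)
  assume "\<not> ?thesis"
  hence neg: "\<And>\<phi>. \<phi> \<in> S \<Longrightarrow> u \<bullet> \<phi> a \<le> 0" by force
  have neg2: "\<psi> u \<bullet> \<xi> a \<le> 0" if "\<psi> \<in> S" "\<xi> \<in> S" for \<psi> \<xi>
  proof -
    have ot: "orthogonal_transformation \<psi>" using G that by (simp add: orth_subgroup_def)
    have "inv \<psi> \<in> S" using G that by (simp add: orth_subgroup_def)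
    hence oti: "orthogonal_transformation (inv \<psi>)" using G by (simp add: orth_subgroup_def)
    have "inv \<psi> \<circ> \<xi> \<in> S" using G that \<open>inv \<psi> \<in> S\<close> by (simp add: orth_subgroup_def)
    hence "u \<bullet> (inv \<psi> \<circ> \<xi>) a \<le> 0" by (rule neg)
    moreover have "inv \<psi> (\<psi> u) = u"
      using orthogonal_transformation_inj[OF ot] by (simp add: inv_f_f)
    moreover have "inv \<psi> (\<psi> u) \<bullet> inv \<psi> (\<xi> a) = \<psi> u \<bullet> \<xi> a"
      using oti unfolding orthogonal_transformation_def by blast
    ultimately show ?thesis by simp
  qed
  have "0 \<in> convex hull {\<phi> u | \<phi>. \<phi> \<in> S}" by (rule zero_in_hull[OF D G sp u])
  then obtain T w where T: "finite T" "T \<subseteq> {\<phi> u | \<phi>. \<phi> \<in> S}" "\<forall>x\<in>T. 0 \<le> w x"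
     "sum w T = 1" "(\<Sum>v\<in>T. w v *\<^sub>R v) = 0"
    unfolding convex_hull_explicit by blast
  obtain v0 where v0: "v0 \<in> T" "w v0 > 0"
    using T(3,4) by (metis less_eq_real_def sum_nonpos zero_less_one not_le)
  obtain \<psi>0 where \<psi>0: "\<psi>0 \<in> S" "v0 = \<psi>0 u" using T(2) v0(1) by blast
  have "norm v0 = 1"
    using \<psi>0 G u by (simp add: orth_subgroup_def orthogonal_transformation_norm)
  hence v0nz: "v0 \<noteq> 0" by auto
  have perp: "v0 \<bullet> b = 0" if bb: "b \<in> {\<phi> a | \<phi>. \<phi> \<in> S}" for b
  proof -
    obtain \<xi> where \<xi>: "\<xi> \<in> S" "b = \<xi> a" using bb by blast
    have le: "\<forall>v\<in>T. w v * (v \<bullet> b) \<le> 0"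
    proof
      fix v assume "v \<in> T"
      then obtain \<psi> where "\<psi> \<in> S" "v = \<psi> u" using T(2) by blast
      hence "v \<bullet> b \<le> 0" using neg2 \<xi> by simp
      thus "w v * (v \<bullet> b) \<le> 0" using T(3) \<open>v \<in> T\<close> by (simp add: mult_nonneg_nonpos)
    qed
    have "(\<Sum>v\<in>T. w v * (v \<bullet> b)) = (\<Sum>v\<in>T. w v *\<^sub>R v) \<bullet> b"
      by (simp add: inner_sum_left)
    also have "\<dots> = 0" using T(5) by simp
    finally have "(\<Sum>v\<in>T. w v * (v \<bullet> b)) = 0" .
    hence "(\<Sum>v\<in>T. - (w v * (v \<bullet> b))) = 0" by (simp add: sum_negf)
    hence "\<forall>v\<in>T. - (w v * (v \<bullet> b)) = 0"
      using sum_nonneg_eq_0_iff[OF T(1), of "\<lambda>v. - (w v * (v \<bullet> b))"] le by force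
    hence "\<forall>v\<in>T. w v * (v \<bullet> b) = 0" by simp
    thus ?thesis using v0 by auto
  qed
  have "convex hull {\<phi> a | \<phi>. \<phi> \<in> S} \<subseteq> {x. v0 \<bullet> x = 0}"
    by (rule hull_minimal) (use perp convex_hyperplane in auto)
  hence "aff_dim (convex hull {\<phi> a | \<phi>. \<phi> \<in> S}) \<le> aff_dim {x. v0 \<bullet> x = 0}"
    by (rule aff_dim_subset)
  also have "\<dots> = int DIM('a) - 1" using v0nz by simp
  finally show False using sp a by (simp add: spanning_property_def)
qed

lemma uniform_dir:
  fixes S :: "('a::euclidean_space \<Rightarrow> 'a) set"
  assumes D: "DIM('a) \<ge> 2" and G: "orth_subgroup S" and sp: "spanning_property S"
  shows "\<exists>\<eta>>0. \<forall>a\<in>sphere 0 1. \<forall>u\<in>sphere 0 1. \<exists>\<phi>\<in>S. u \<bullet> \<phi> a > \<eta>"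
proof -
  define F where "F = (\<lambda>(\<phi>::'a\<Rightarrow>'a, t::real). {q::'a\<times>'a. t < snd q \<bullet> \<phi> (fst q)})"
  have cpt: "compact (sphere (0::'a) 1 \<times> sphere (0::'a) 1)"
    by (intro compact_Times compact_sphere)
  have opn: "open (F c)" if "c \<in> S \<times> {0<..}" for c
  proof -
    obtain \<phi> t where c0: "c = (\<phi>, t)" by fastforce
    have c: "c = (\<phi>, t)" "\<phi> \<in> S" using that c0 by auto
    have "linear \<phi>" using G c by (simp add: orth_subgroup_def orthogonal_transformation)
    hence "continuous_on UNIV \<phi>" by (simp add: linear_continuous_on linear_conv_bounded_linear)
    hence "continuous_on UNIV (\<phi> \<circ> fst)"
      by (intro continuous_on_compose continuous_on_fst) (auto intro: continuous_on_subset)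
    hence "continuous_on UNIV (\<lambda>q::'a\<times>'a. snd q \<bullet> \<phi> (fst q))"
      by (intro continuous_intros) (simp add: o_def)
    thus ?thesis unfolding F_def c by (auto intro: open_Collect_less continuous_intros)
  qed
  have cov: "sphere 0 1 \<times> sphere 0 1 \<subseteq> (\<Union>c\<in>S \<times> {0<..}. F c)"
  proof
    fix q :: "'a \<times> 'a" assume "q \<in> sphere 0 1 \<times> sphere 0 1"
    then obtain \<phi> where "\<phi> \<in> S" "snd q \<bullet> \<phi> (fst q) > 0"
      using pos_dir[OF D G sp, of "snd q" "fst q"] by (auto simp: mem_Times_iff)
    thus "q \<in> (\<Union>c\<in>S \<times> {0<..}. F c)"
      by (intro UN_I[of "(\<phi>, snd q \<bullet> \<phi> (fst q) / 2)"]) (auto simp: F_def)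
  qed
  obtain C where C: "C \<subseteq> S \<times> {0<..}" "finite C" "sphere 0 1 \<times> sphere 0 1 \<subseteq> (\<Union>c\<in>C. F c)"
    using compactE_image[OF cpt opn cov] by blast
  define \<eta> where "\<eta> = Min (insert 1 (snd ` C))"
  have "\<eta> > 0" unfolding \<eta>_def using C(1,2) by (subst Min_gr_iff) auto
  moreover have "\<forall>a\<in>sphere 0 1. \<forall>u\<in>sphere 0 1. \<exists>\<phi>\<in>S. u \<bullet> \<phi> a > \<eta>"
  proof (intro ballI)
    fix a u :: 'a assume "a \<in> sphere 0 1" "u \<in> sphere 0 1"
    then obtain c where c: "c \<in> C" "(a, u) \<in> F c" using C(3) by blast
    obtain \<phi> t where ct: "c = (\<phi>, t)" by fastforce
    have "\<eta> \<le> t" unfolding \<eta>_def using C(2) c(1) ct by (intro Min_le) force+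
    moreover have "t < u \<bullet> \<phi> a" using c(2) ct by (simp add: F_def)
    moreover have "\<phi> \<in> S" using C(1) c(1) ct by auto
    ultimately show "\<exists>\<phi>\<in>S. u \<bullet> \<phi> a > \<eta>" by force
  qed
  ultimately show ?thesis by blast
qed

lemma em_ball:
  "emeasure lborel (ball (c::'a::euclidean_space) r) = ennreal (measure lborel (ball c r))"
  using emeasure_lborel_ball_finite[of c r] by (intro emeasure_eq_ennreal_measure) simp

lemma K0_facts:
  assumes "\<Omega> \<in> K0 S"
  shows "compact \<Omega>" "convex \<Omega>" "0 \<in> \<Omega>" "\<And>\<phi>. \<phi> \<in> S \<Longrightarrow> \<phi> ` \<Omega> = \<Omega>"
  using assms by (auto simp: K0_def convex_body_def)

lemma sf_bdd:
  fixes \<Omega> :: "'a::euclidean_space set"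
  assumes "compact \<Omega>"
  shows "bdd_above ((\<lambda>y. u \<bullet> y) ` \<Omega>)"
proof -
  obtain R where R: "\<forall>y\<in>\<Omega>. norm y \<le> R" using compact_imp_bounded[OF assms] bounded_iff by blast
  have "u \<bullet> y \<le> norm u * R" if "y \<in> \<Omega>" for y
    using Cauchy_Schwarz_ineq2[of u y] R that
    by (meson abs_le_D1 mult_left_mono norm_ge_zero order_trans)
  thus ?thesis by (intro bdd_aboveI2[where M="norm u * R"]) auto
qed

lemma sf_upper:
  fixes \<Omega> :: "'a::euclidean_space set"
  assumes "compact \<Omega>" "y \<in> \<Omega>"
  shows "u \<bullet> y \<le> support_fun \<Omega> u"
  unfolding support_fun_def using sf_bdd[OF assms(1)] assms(2) by (rule cSUP_upper2) auto

lemma sf_nonneg: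
  fixes \<Omega> :: "'a::euclidean_space set"
  assumes "compact \<Omega>" "0 \<in> \<Omega>"
  shows "0 \<le> support_fun \<Omega> u"
  using sf_upper[OF assms, of u] by simp

lemma sf_lip:
  fixes \<Omega> :: "'a::euclidean_space set"
  assumes "\<Omega> \<noteq> {}" "compact \<Omega>" "\<forall>y\<in>\<Omega>. norm y \<le> R"
  shows "support_fun \<Omega> u \<le> support_fun \<Omega> u0 + R * norm (u - u0)"
  unfolding support_fun_def
proof (rule cSUP_least[OF assms(1)])
  fix y assume y: "y \<in> \<Omega>"
  have "u \<bullet> y = u0 \<bullet> y + (u - u0) \<bullet> y" by (simp add: inner_diff_left)
  also have "(u - u0) \<bullet> y \<le> norm (u - u0) * norm y" by (rule norm_cauchy_schwarz)
  also have "\<dots> \<le> norm (u - u0) * R" using assms(3) y by (simp add: mult_left_mono)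
  finally have "u \<bullet> y \<le> u0 \<bullet> y + R * norm (u - u0)" by (simp add: mult.commute)
  moreover have "u0 \<bullet> y \<le> (SUP y\<in>\<Omega>. u0 \<bullet> y)"
    using sf_upper[OF assms(2) y, of u0] by (simp add: support_fun_def)
  ultimately show "u \<bullet> y \<le> (SUP y\<in>\<Omega>. u0 \<bullet> y) + R * norm (u - u0)" by linarith
qed

lemma sphere_int_const_lower:
  fixes f :: "'a::euclidean_space \<Rightarrow> real"
  assumes "\<And>x. x \<in> sphere 0 1 \<Longrightarrow> c1 \<le> f x"
  shows "ennreal c1 * emeasure lborel (ball (0::'a) 1) \<le> sphere_int (\<lambda>u. ennreal (f u))"
proof -
  have "ennreal c1 * emeasure lborel (ball (0::'a) 1) = (\<integral>\<^sup>+ x. ennreal c1 * indicator (ball (0::'a) 1) x \<partial>lborel)"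
    by (simp add: nn_integral_cmult_indicator)
  also have "\<dots> \<le> sphere_int (\<lambda>u. ennreal (f u))"
    unfolding sphere_int_def
  proof (rule nn_integral_mono_AE)
    show "AE x in lborel. ennreal c1 * indicator (ball 0 1) x \<le> ennreal (f (x /\<^sub>R norm x)) * indicator (ball 0 1) x"
      using AE_lborel_singleton[of 0]
    proof eventually_elim
      case (elim x)
      hence "x /\<^sub>R norm x \<in> sphere 0 1" by simp
      hence "c1 \<le> f (x /\<^sub>R norm x)" by (rule assms)
      thus ?case by (auto simp: indicator_def intro: ennreal_leI)
    qed
  qed
  finally show ?thesis .
qed

lemma lemmaA:
  fixes \<Omega> :: "'a::euclidean_space set" and f :: "'a \<Rightarrow> real"
  assumes \<Omega>: "\<Omega> \<in> Kp S f p" and p: "p < 0" and c: "c > 0"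
    and hc: "\<And>u. u \<in> sphere 0 1 \<Longrightarrow> c \<le> support_fun \<Omega> u"
    and c1: "0 < c1" and fb: "\<And>x. x \<in> sphere 0 1 \<Longrightarrow> c1 \<le> f x \<and> f x \<le> c2"
  shows "c1 \<le> c2 * c powr p"
proof -
  define mB where "mB = measure lborel (ball (0::'a) 1)"
  have mB: "mB > 0" unfolding mB_def using content_ball_pos[of 1 "0::'a"] by simp
  have eq: "sphere_int (\<lambda>u. ennreal (f u) * pow_ext (support_fun \<Omega> u) p) = sphere_int (\<lambda>u. ennreal (f u))"
    using \<Omega> by (simp add: Kp_def)
  have "ennreal c1 * ennreal mB \<le> sphere_int (\<lambda>u. ennreal (f u))"
    using sphere_int_const_lower[of c1 f] fb em_ball[of "0::'a" 1] by (simp add: mB_def)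
  also have "\<dots> = sphere_int (\<lambda>u. ennreal (f u) * pow_ext (support_fun \<Omega> u) p)" using eq by simp
  also have "\<dots> \<le> (\<integral>\<^sup>+ x. ennreal (c2 * c powr p) * indicator (ball (0::'a) 1) x \<partial>lborel)"
    unfolding sphere_int_def
  proof (rule nn_integral_mono_AE)
    show "AE x in lborel. ennreal (f (x /\<^sub>R norm x)) * pow_ext (support_fun \<Omega> (x /\<^sub>R norm x)) p * indicator (ball 0 1) x
        \<le> ennreal (c2 * c powr p) * indicator (ball 0 1) x"
      using AE_lborel_singleton[of 0]
    proof eventually_elim
      case (elim x)
      define u where "u = x /\<^sub>R norm x"
      have u: "u \<in> sphere 0 1" using elim by (simp add: u_def)
      have hu: "c \<le> support_fun \<Omega> u" by (rule hc[OF u])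
      have pe: "pow_ext (support_fun \<Omega> u) p = ennreal (support_fun \<Omega> u powr p)"
        using hu c by (simp add: pow_ext_def)
      have pm: "support_fun \<Omega> u powr p \<le> c powr p" using powr_mono2'[of p c "support_fun \<Omega> u"] p c hu by simp
      have "f u * support_fun \<Omega> u powr p \<le> c2 * c powr p"
        using fb[OF u] c1 pm by (intro mult_mono) auto
      hence "ennreal (f u) * pow_ext (support_fun \<Omega> u) p \<le> ennreal (c2 * c powr p)"
        using fb[OF u] c1 by (simp add: pe ennreal_mult[symmetric] ennreal_leI)
      thus ?case by (auto simp: indicator_def u_def)
    qed
  qed
  also have "\<dots> = ennreal (c2 * c powr p) * ennreal mB"
    by (simp add: nn_integral_cmult_indicator em_ball mB_def)
  finally have "ennreal (c1 * mB) \<le> ennreal (c2 * c powr p * mB)"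
    using mB c1 by (simp add: ennreal_mult''[symmetric])
  moreover have "0 \<le> c2"
  proof -
    obtain b :: 'a where "b \<in> Basis" using nonempty_Basis by blast
    hence "b \<in> sphere 0 1" by simp
    thus ?thesis using fb c1 by force
  qed
  ultimately have "c1 * mB \<le> c2 * c powr p * mB"
    using mB by (subst (asm) ennreal_le_iff) (auto simp: ennreal_le_iff2)
  thus ?thesis using mB by simp
qed

lemma sphere_int_const_upper:
  fixes f :: "'a::euclidean_space \<Rightarrow> real"
  assumes "\<And>x. x \<in> sphere 0 1 \<Longrightarrow> f x \<le> c2"
  shows "sphere_int (\<lambda>u. ennreal (f u)) \<le> ennreal c2 * emeasure lborel (ball (0::'a) 1)"
proof -
  have "sphere_int (\<lambda>u. ennreal (f u)) \<le> (\<integral>\<^sup>+ x. ennreal c2 * indicator (ball (0::'a) 1) x \<partial>lborel)"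
    unfolding sphere_int_def
  proof (rule nn_integral_mono_AE)
    show "AE x in lborel. ennreal (f (x /\<^sub>R norm x)) * indicator (ball 0 1) x \<le> ennreal c2 * indicator (ball 0 1) x"
      using AE_lborel_singleton[of 0]
    proof eventually_elim
      case (elim x)
      hence "x /\<^sub>R norm x \<in> sphere 0 1" by simp
      hence "f (x /\<^sub>R norm x) \<le> c2" by (rule assms)
      thus ?case by (auto simp: indicator_def intro: ennreal_leI)
    qed
  qed
  also have "\<dots> = ennreal c2 * emeasure lborel (ball (0::'a) 1)"
    by (simp add: nn_integral_cmult_indicator)
  finally show ?thesis .
qed

lemma near_dir:
  fixes x u0 :: "'a::euclidean_space"
  assumes u0: "norm u0 = 1" and r: "0 < r" "r \<le> 1/4" and x: "dist x (u0 /\<^sub>R 2) < r"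
  shows "x \<noteq> 0" "norm x < 1" "norm (x /\<^sub>R norm x - u0) \<le> 4 * r"
proof -
  have n2: "norm (u0 /\<^sub>R 2) = 1/2" using u0 by simp
  have d: "norm (x - u0 /\<^sub>R 2) < r" using x by (simp add: dist_norm)
  have a1: "\<bar>norm x - 1/2\<bar> < r"
    using norm_triangle_ineq3[of x "u0 /\<^sub>R 2"] d n2 by linarith
  hence nx: "norm x > 0" using r by linarith
  thus "x \<noteq> 0" by auto
  show "norm x < 1" using a1 r by linarith
  have e1: "x /\<^sub>R norm x - 2 *\<^sub>R x = (1 / norm x - 2) *\<^sub>R x" by (simp add: algebra_simps divide_inverse)
  have "norm (x /\<^sub>R norm x - 2 *\<^sub>R x) = \<bar>1 / norm x - 2\<bar> * norm x" by (simp add: e1)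
  also have "\<dots> = \<bar>(1 / norm x - 2) * norm x\<bar>" by (simp add: abs_mult)
  finally have b0: "norm (x /\<^sub>R norm x - 2 *\<^sub>R x) = \<bar>(1 / norm x - 2) * norm x\<bar>" .
  have "(1 / norm x - 2) * norm x = 1 - 2 * norm x" using nx by (simp add: field_simps)
  hence b1: "norm (x /\<^sub>R norm x - 2 *\<^sub>R x) \<le> 2 * r" using a1 b0 by simp
  have "2 *\<^sub>R x - u0 = 2 *\<^sub>R (x - u0 /\<^sub>R 2)" by (simp add: algebra_simps)
  hence b2: "norm (2 *\<^sub>R x - u0) \<le> 2 * r" using d by simp
  have "x /\<^sub>R norm x - u0 = (x /\<^sub>R norm x - 2 *\<^sub>R x) + (2 *\<^sub>R x - u0)" by simp
  hence "norm (x /\<^sub>R norm x - u0) \<le> norm (x /\<^sub>R norm x - 2 *\<^sub>R x) + norm (2 *\<^sub>R x - u0)"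
    by (metis norm_triangle_ineq)
  thus "norm (x /\<^sub>R norm x - u0) \<le> 4 * r" using b1 b2 by linarith
qed

lemma lemmaB:
  fixes \<Omega> :: "'a::euclidean_space set" and f :: "'a \<Rightarrow> real"
  assumes \<Omega>: "\<Omega> \<in> Kp S f p" and p: "p < 0" and t: "t > 0"
    and c1: "0 < c1" and fb: "\<And>x. x \<in> sphere 0 1 \<Longrightarrow> c1 \<le> f x \<and> f x \<le> c2"
    and u0: "norm u0 = 1" and r: "0 < r" "r \<le> 1/4"
    and ht: "\<And>u. u \<in> sphere 0 1 \<Longrightarrow> norm (u - u0) \<le> 4 * r \<Longrightarrow> support_fun \<Omega> u \<le> t"
  shows "c1 * t powr p * measure lborel (ball (0::'a) r) \<le> c2 * measure lborel (ball (0::'a) 1)"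
proof -
  have cpt: "compact \<Omega>" "0 \<in> \<Omega>" using \<Omega> by (auto simp: Kp_def K0_def convex_body_def)
  have c2: "0 \<le> c2"
  proof -
    obtain b :: 'a where "b \<in> Basis" using nonempty_Basis by blast
    hence "b \<in> sphere 0 1" by simp
    thus ?thesis using fb c1 by force
  qed
  define K where "K = c1 * t powr p"
  have K: "K \<ge> 0" using c1 by (simp add: K_def)
  have eq: "sphere_int (\<lambda>u. ennreal (f u) * pow_ext (support_fun \<Omega> u) p) = sphere_int (\<lambda>u. ennreal (f u))"
    using \<Omega> by (simp add: Kp_def)
  have "ennreal K * ennreal (measure lborel (ball (0::'a) r)) = ennreal K * emeasure lborel (ball (u0 /\<^sub>R 2) r)"
    using content_ball_conv_unit_ball[of r "0::'a"] content_ball_conv_unit_ball[of r "u0 /\<^sub>R 2"] r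
    by (simp add: em_ball)
  also have "\<dots> = (\<integral>\<^sup>+ x. ennreal K * indicator (ball (u0 /\<^sub>R 2) r) x \<partial>lborel)"
    by (simp add: nn_integral_cmult_indicator)
  also have "\<dots> \<le> sphere_int (\<lambda>u. ennreal (f u) * pow_ext (support_fun \<Omega> u) p)"
    unfolding sphere_int_def
  proof (rule nn_integral_mono)
    fix x :: 'a
    show "ennreal K * indicator (ball (u0 /\<^sub>R 2) r) x \<le>
      ennreal (f (x /\<^sub>R norm x)) * pow_ext (support_fun \<Omega> (x /\<^sub>R norm x)) p * indicator (ball 0 1) x"
    proof (cases "x \<in> ball (u0 /\<^sub>R 2) r")
      case False thus ?thesis by simp
    next
      case True
      hence xd: "dist x (u0 /\<^sub>R 2) < r" by (simp add: dist_commute)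
      note nd = near_dir[OF u0 r xd]
      define u where "u = x /\<^sub>R norm x"
      have u: "u \<in> sphere 0 1" using nd(1) by (simp add: u_def)
      have hu: "support_fun \<Omega> u \<le> t" using ht[OF u] nd(3) by (simp add: u_def)
      have fu: "c1 \<le> f u" using fb[OF u] by simp
      have "ennreal K \<le> ennreal (f u) * pow_ext (support_fun \<Omega> u) p"
      proof (cases "support_fun \<Omega> u = 0")
        case True
        thus ?thesis using p fu c1 by (simp add: pow_ext_def ennreal_mult_top)
      next
        case False
        hence pos: "support_fun \<Omega> u > 0" using sf_nonneg[OF cpt, of u] by simp
        have "t powr p \<le> support_fun \<Omega> u powr p" using powr_mono2'[of p "support_fun \<Omega> u" t] p pos hu by simp
        hence "K \<le> f u * support_fun \<Omega> u powr p"
          unfolding K_def using fu c1 by (intro mult_mono) auto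
        hence "ennreal K \<le> ennreal (f u * support_fun \<Omega> u powr p)" by (rule ennreal_leI)
        thus ?thesis using False fu c1 by (simp add: pow_ext_def ennreal_mult)
      qed
      thus ?thesis using True nd(2) by (simp add: u_def indicator_def)
    qed
  qed
  also have "\<dots> = sphere_int (\<lambda>u. ennreal (f u))" by (rule eq)
  also have "\<dots> \<le> ennreal c2 * emeasure lborel (ball (0::'a) 1)"
    by (rule sphere_int_const_upper) (use fb in auto)
  also have "\<dots> = ennreal (c2 * measure lborel (ball (0::'a) 1))"
    by (simp add: em_ball ennreal_mult c2)
  finally have "ennreal (K * measure lborel (ball (0::'a) r)) \<le> ennreal (c2 * measure lborel (ball (0::'a) 1))"
    by (simp add: ennreal_mult K)
  hence "K * measure lborel (ball (0::'a) r) \<le> c2 * measure lborel (ball (0::'a) 1)"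
    using c2 by (subst (asm) ennreal_le_iff) auto
  thus ?thesis by (simp add: K_def)
qed

lemma basis_pt: "\<exists>b::'a::euclidean_space. b \<in> sphere 0 1"
proof -
  obtain b :: 'a where "b \<in> Basis" using nonempty_Basis by blast
  thus ?thesis by (intro exI[of _ b]) simp
qed

lemma lemmaR:
  fixes \<Omega> :: "'a::euclidean_space set" and f :: "'a \<Rightarrow> real"
  assumes G: "orth_subgroup S" and eta: "\<eta> > 0"
    and unif: "\<forall>a\<in>sphere 0 1. \<forall>u\<in>sphere 0 1. \<exists>\<phi>\<in>S. u \<bullet> \<phi> a > \<eta>"
    and \<Omega>: "\<Omega> \<in> Kp S f p" and p: "p \<le> -1"
    and c1: "0 < c1" and fb: "\<And>x. x \<in> sphere 0 1 \<Longrightarrow> c1 \<le> f x \<and> f x \<le> c2"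
    and y: "y \<in> \<Omega>"
  shows "norm y * \<eta> \<le> c2 / c1"
proof -
  have c12: "c1 \<le> c2" using basis_pt fb by force
  have K: "\<Omega> \<in> K0 S" using \<Omega> by (simp add: Kp_def)
  note KF = K0_facts[OF K]
  show ?thesis
  proof (cases "y = 0")
    case True thus ?thesis using c1 c12 by simp
  next
    case False
    define a where "a = y /\<^sub>R norm y"
    have a: "a \<in> sphere 0 1" using False by (simp add: a_def)
    define c where "c = norm y * \<eta>"
    have c: "c > 0" using False eta by (simp add: c_def)
    have hc: "c \<le> support_fun \<Omega> u" if u: "u \<in> sphere 0 1" for u
    proof -
      obtain \<phi> where \<phi>: "\<phi> \<in> S" "u \<bullet> \<phi> a > \<eta>" using unif a u by blast
      have lin: "linear \<phi>" using G \<phi>(1) by (simp add: orth_subgroup_def orthogonal_transformation)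
      have "\<phi> y = norm y *\<^sub>R \<phi> a" using False lin by (simp add: a_def linear_scale)
      moreover have "\<phi> y \<in> \<Omega>" using KF(4)[OF \<phi>(1)] y by blast
      ultimately have "u \<bullet> (norm y *\<^sub>R \<phi> a) \<le> support_fun \<Omega> u" using sf_upper[OF KF(1)] by metis
      moreover have "c \<le> u \<bullet> (norm y *\<^sub>R \<phi> a)" using \<phi>(2) unfolding c_def
        by (simp add: mult_left_mono less_imp_le)
      ultimately show ?thesis by linarith
    qed
    have A: "c1 \<le> c2 * c powr p" by (rule lemmaA[OF \<Omega> _ c hc c1 fb]) (use p in auto)
    show ?thesis
    proof (cases "c \<le> 1")
      case True
      moreover have "1 \<le> c2 / c1" using c12 c1 by simp
      ultimately show ?thesis by (simp add: c_def[symmetric])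
    next
      case False
      have "c powr p \<le> c powr (-1)" using False p by (intro powr_mono) auto
      also have "\<dots> = 1 / c" using c by (simp add: powr_minus divide_inverse)
      finally have "c2 * c powr p \<le> c2 * (1 / c)" using c12 c1 by (intro mult_left_mono) auto
      hence "c1 \<le> c2 / c" using A by simp
      hence "c1 * c \<le> c2" using c by (simp add: field_simps)
      thus ?thesis using c c1 by (simp add: c_def field_simps)
    qed
  qed
qed

theorem corollary3p1:
  fixes S :: "('a::euclidean_space \<Rightarrow> 'a) set"
    and f :: "'a \<Rightarrow> real"
    and \<Omega> :: "real \<Rightarrow> 'a set"
    and c1 c2 :: real
  assumes "DIM('a) \<ge> 2"
    and "discrete_orth_subgroup S"
    and "spanning_property S"
    and "f \<in> borel_measurable (restrict_space borel (sphere 0 1))"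
    and "\<And>\<phi> x. \<phi> \<in> S \<Longrightarrow> x \<in> sphere 0 1 \<Longrightarrow> f (\<phi> x) = f x"
    and "0 < c1" and "0 < c2"
    and "\<And>x. x \<in> sphere 0 1 \<Longrightarrow> c1 \<le> f x \<and> f x \<le> c2"
    and "\<And>p. p < - real DIM('a) \<Longrightarrow> is_V_maximizer S f p (\<Omega> p)"
  shows "((\<lambda>p. Inf (support_fun (\<Omega> p) ` sphere 0 1)) \<longlongrightarrow> 1) at_bot"
proof -
  note D = assms(1) and sp = assms(3) and c1 = assms(6) and c2 = assms(7) and fb = assms(8)
  have G: "orth_subgroup S" using assms(2) by (simp add: discrete_orth_subgroup_def)
  obtain \<eta> where eta: "\<eta> > 0" and unif: "\<forall>a\<in>sphere 0 1. \<forall>u\<in>sphere 0 1. \<exists>\<phi>\<in>S. u \<bullet> \<phi> a > \<eta>"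
    using uniform_dir[OF D G sp] by blast
  have c12: "c1 \<le> c2" using basis_pt fb by force
  define R0 where "R0 = c2 / c1 / \<eta>"
  have R0: "R0 \<ge> 0" using c1 c2 eta by (simp add: R0_def)
  define T where "T = - real DIM('a) - 1"
  have T: "T \<le> -1" using D by (simp add: T_def)
  have KP: "\<Omega> p \<in> Kp S f p" if "p \<le> T" for p
    using assms(9)[of p] that by (simp add: is_V_maximizer_def T_def)
  have KF: "compact (\<Omega> p)" "0 \<in> \<Omega> p" if "p \<le> T" for p
    using KP[OF that] by (auto simp: Kp_def K0_def convex_body_def)
  have bnd: "\<forall>y\<in>\<Omega> p. norm y \<le> R0" if "p \<le> T" for p
  proof
    fix y assume "y \<in> \<Omega> p"
    hence "norm y * \<eta> \<le> c2 / c1"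
      using lemmaR[OF G eta unif KP[OF that] _ c1 fb] T that by simp
    thus "norm y \<le> R0" using eta unfolding R0_def by (subst pos_le_divide_eq) (auto simp: mult.commute)
  qed
  define m where "m p = Inf (support_fun (\<Omega> p) ` sphere 0 1)" for p
  have ne: "support_fun (\<Omega> p) ` sphere 0 1 \<noteq> {}" for p using basis_pt by blast
  have bb: "bdd_below (support_fun (\<Omega> p) ` sphere 0 1)" if "p \<le> T" for p
    using sf_nonneg[OF KF[OF that]] by (intro bdd_belowI2[where m=0]) auto
  have mle: "m p \<le> support_fun (\<Omega> p) u" if "p \<le> T" "u \<in> sphere 0 1" for p u
    unfolding m_def using bb[OF that(1)] that(2) by (simp add: cINF_lower)
  have mge: "0 \<le> m p" if "p \<le> T" for p
    unfolding m_def using ne sf_nonneg[OF KF[OF that]] by (intro cInf_greatest) auto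
  have upper: "\<exists>N. \<forall>p\<le>N. m p < 1 + \<epsilon>" if e: "\<epsilon> > 0" for \<epsilon>
  proof -
    define L where "L = ln (1 + \<epsilon>)"
    have L: "L > 0" using e by (simp add: L_def)
    define N where "N = min T (ln (c1 / c2) / L - 1)"
    have "m p < 1 + \<epsilon>" if pN: "p \<le> N" for p
    proof (rule ccontr)
      assume "\<not> ?thesis"
      hence mp: "1 + \<epsilon> \<le> m p" by simp
      have pT: "p \<le> T" using pN by (simp add: N_def)
      have A: "c1 \<le> c2 * m p powr p"
        by (rule lemmaA[OF KP[OF pT] _ _ mle[OF pT] c1 fb]) (use pT T mp e in auto)
      have "m p powr p \<le> (1 + \<epsilon>) powr p" using powr_mono2'[of p "1+\<epsilon>" "m p"] pT T mp e by simp
      also have "\<dots> = exp (p * L)" using e by (simp add: powr_def L_def)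
      also have "p * L < ln (c1 / c2)"
      proof -
        have "p < ln (c1 / c2) / L" using pN by (simp add: N_def)
        thus ?thesis using L by (simp add: pos_less_divide_eq)
      qed
      hence "exp (p * L) < c1 / c2" using c1 c2 by (metis exp_less_cancel_iff exp_ln divide_pos_pos)
      finally have "m p powr p < c1 / c2" .
      hence "c2 * m p powr p < c1" using c2 by (simp add: field_simps)
      thus False using A by simp
    qed
    thus ?thesis by blast
  qed
  have lower: "\<exists>N. \<forall>p\<le>N. 1 - \<epsilon> < m p" if e: "\<epsilon> > 0" "\<epsilon> < 1" for \<epsilon>
  proof -
    define r where "r = min (1/4) (\<epsilon> / (16 * (R0 + 1)))"
    have r: "0 < r" "r \<le> 1/4" using e R0 by (auto simp: r_def)
    have r4: "R0 * (4 * r) \<le> \<epsilon> / 4"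
    proof -
      have "r \<le> \<epsilon> / (16 * (R0 + 1))" by (simp add: r_def)
      hence a: "r * (16 * (R0 + 1)) \<le> \<epsilon>" using R0 by (simp add: pos_le_divide_eq)
      have "R0 * r \<le> (R0 + 1) * r" using r by simp
      thus ?thesis using a by (simp add: algebra_simps)
    qed
    define t where "t = 1 - \<epsilon> / 4"
    have t: "0 < t" "t < 1" using e by (auto simp: t_def)
    define mr where "mr = measure lborel (ball (0::'a) r)"
    define mB where "mB = measure lborel (ball (0::'a) 1)"
    have mr: "mr > 0" unfolding mr_def using content_ball_pos[of r "0::'a"] r by simp
    have mB: "mB > 0" unfolding mB_def using content_ball_pos[of 1 "0::'a"] by simp
    define K where "K = c2 * mB / (c1 * mr)"
    have K: "K > 0" using c1 c2 mr mB by (simp add: K_def)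
    define L where "L = ln t"
    have L: "L < 0" using t by (simp add: L_def)
    define N where "N = min T (ln K / L - 1)"
    have "1 - \<epsilon> < m p" if pN: "p \<le> N" for p
    proof (rule ccontr)
      assume "\<not> ?thesis"
      hence mp: "m p < 1 - \<epsilon> / 2" using e by simp
      have pT: "p \<le> T" using pN by (simp add: N_def)
      obtain h0 where h0: "h0 \<in> support_fun (\<Omega> p) ` sphere 0 1" "h0 < 1 - \<epsilon> / 2"
        using cInf_lessD[OF ne mp[unfolded m_def]] by blast
      then obtain u0 where u0: "u0 \<in> sphere 0 1" "support_fun (\<Omega> p) u0 < 1 - \<epsilon> / 2" by blast
      have ht: "support_fun (\<Omega> p) u \<le> t" if "u \<in> sphere 0 1" "norm (u - u0) \<le> 4 * r" for u
      proof -
        have "support_fun (\<Omega> p) u \<le> support_fun (\<Omega> p) u0 + R0 * norm (u - u0)"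
          by (rule sf_lip) (use KF[OF pT] bnd[OF pT] in auto)
        also have "R0 * norm (u - u0) \<le> R0 * (4 * r)" using that R0 by (intro mult_left_mono) auto
        finally show ?thesis using u0 r4 by (simp add: t_def)
      qed
      have B: "c1 * t powr p * mr \<le> c2 * mB"
        unfolding mr_def mB_def
        by (rule lemmaB[OF KP[OF pT] _ t(1) c1 fb _ r ht]) (use pT T u0 in auto)
      have "p * L > ln K"
      proof -
        have "p < ln K / L" using pN by (simp add: N_def)
        thus ?thesis using L by (simp add: neg_less_divide_eq mult.commute)
      qed
      hence "K < exp (p * L)" using K by (metis exp_less_cancel_iff exp_ln)
      also have "exp (p * L) = t powr p" using t by (simp add: powr_def L_def mult.commute)
      finally have "K < t powr p" .
      hence "c2 * mB < c1 * mr * t powr p" using c1 mr by (simp add: K_def field_simps)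
      thus False using B by (simp add: mult_ac)
    qed
    thus ?thesis by blast
  qed
  show ?thesis
    unfolding tendsto_iff eventually_at_bot_linorder m_def[symmetric]
  proof (intro allI impI)
    fix e :: real assume e: "e > 0"
    obtain N1 where N1: "\<forall>p\<le>N1. m p < 1 + e" using upper[OF e] by blast
    have "min e (1/2) > 0" "min e (1/2) < 1" using e by auto
    then obtain N2 where N2: "\<forall>p\<le>N2. 1 - min e (1/2) < m p" using lower by blast
    have "\<forall>p\<le>min N1 N2. dist (m p) 1 < e"
    proof (intro allI impI)
      fix p assume "p \<le> min N1 N2"
      hence "m p < 1 + e" "1 - min e (1/2) < m p" using N1 N2 by auto
      thus "dist (m p) 1 < e" by (simp add: dist_real_def abs_less_iff)
    qed
    thus "\<exists>N. \<forall>p\<le>N. dist (m p) 1 < e" by blast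
  qed
qed

end
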